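(* Let $L$ be a right pre-Lie algebra over $k$ and let $(S(L),\ast)$ be the Guin--Oudom presentation of its enveloping algebra. For arbitrary $l_1,\ldots,l_n\in L$ one has, in $S(L)$, $$ l_1\cdots l_n=\sum_{\{P_1,\ldots,P_k\}}(-1)^{n-k}\,l_{P_1}\ast\cdots\ast l_{P_k}, $$ where the left-hand side is the commutative product in $S(L)$, the sum runs over all set partitions $\{P_1,\ldots,P_k\}$ of $\{1,\ldots,n\}$ with blocks indexed so that $\max P_1<\max P_2<\cdots<\max P_k$, and for a block $P_i=\{p_1<\cdots<p_h\}$, $$ l_{P_i}:=\sum_{\sigma\in S_{h-1}} l_{p_{\sigma(1)}}\curvearrowleft\Big(l_{p_{\sigma(2)}}\curvearrowleft\big(\cdots\curvearrowleft(l_{p_{\sigma(h-1)}}\curvearrowleft l_{p_h})\cdots\big)\Big) $$ (for $h=1$, $l_{P_i}=l_{p_1}$).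
   Context: $k$ is a field of characteristic zero. A right pre-Lie algebra is a vector space $L$ with a bilinear product $\curvearrowleft$ satisfying $(x\curvearrowleft y)\curvearrowleft z-x\curvearrowleft(y\curvearrowleft z)=(x\curvearrowleft z)\curvearrowleft y-x\curvearrowleft(z\curvearrowleft y)$ for all $x,y,z\in L$. $S(L)$ is the symmetric algebra on $L$ (commutative product written as juxtaposition, unit $1$). The pre-Lie product is extended to an action of $S(L)$ on $L$ recursively: $l\curvearrowleft 1=l$ and, for $l,l_1,\ldots,l_n\in L$, $l\curvearrowleft(l_1\cdots l_n)=(l\curvearrowleft(l_1\cdots l_{n-1}))\curvearrowleft l_n-\sum_{i=1}^{n-1}l\curvearrowleft(l_1\cdots l_{i-1}(l_i\curvearrowleft l_n)l_{i+1}\cdots l_{n-1})$. The Guin--Oudom product $\ast$ on $S(L)$ is the bilinear product with unit $1$ given by $(a_1\cdots a_n)\ast(b_1\cdots b_m)=\sum_f B_0\,(a_1\curvearrowleft B_1)\cdots(a_n\curvearrowleft B_n)$ for $a_i,b_j\in L$, the sum over all maps $f:\{1,\ldots,m\}\to\{0,\ldots,n\}$, with $B_i=\prod_{j\in f^{-1}(i)}b_j$ (empty product $=1$). It is associative and $(S(L),\ast)$ is isomorphic to the universal enveloping algebra of the Lie algebra $(L,[a,b]=a\curvearrowleft b-b\curvearrowleft a)$. *)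

theory Defs
  imports Main "HOL-Library.Multiset" "HOL-Library.Poly_Mapping" "HOL-Library.Disjoint_Sets"
    "HOL-Combinatorics.Multiset_Permutations"
begin

definition right_pre_Lie :: "('k::field \<Rightarrow> 'l::ab_group_add \<Rightarrow> 'l) \<Rightarrow> ('l \<Rightarrow> 'l \<Rightarrow> 'l) \<Rightarrow> bool" where
  "right_pre_Lie scale pl \<longleftrightarrow> vector_space scale
   \<and> (\<forall>x y z. pl (x + y) z = pl x z + pl y z)
   \<and> (\<forall>x y z. pl x (y + z) = pl x y + pl x z)
   \<and> (\<forall>c x y. pl (scale c x) y = scale c (pl x y))
   \<and> (\<forall>c x y. pl x (scale c y) = scale c (pl x y))
   \<and> (\<forall>x y z. pl (pl x y) z - pl x (pl y z) = pl (pl x z) y - pl x (pl z y))"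

text \<open>Free commutative k-algebra on the underlying set of L: polynomials whose monomials
  are finite multisets of elements of L.  S(L) is its quotient by the ideal symI.\<close>
definition Xv :: "'l \<Rightarrow> ('l multiset \<Rightarrow>\<^sub>0 'k::comm_semiring_1)" where
  "Xv a = Poly_Mapping.single {#a#} 1"

definition Cst :: "'k::comm_semiring_1 \<Rightarrow> ('l multiset \<Rightarrow>\<^sub>0 'k)" where
  "Cst c = Poly_Mapping.single {#} c"

definition mon :: "'l list \<Rightarrow> ('l multiset \<Rightarrow>\<^sub>0 'k::comm_semiring_1)" where
  "mon xs = prod_list (map Xv xs)"

inductive_set symI :: "('k::field \<Rightarrow> 'l::ab_group_add \<Rightarrow> 'l) \<Rightarrow> ('l multiset \<Rightarrow>\<^sub>0 'k) set"
  for scale where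
  zero: "0 \<in> symI scale"
| add: "p \<in> symI scale \<Longrightarrow> q \<in> symI scale \<Longrightarrow> p + q \<in> symI scale"
| gen_add: "r * (Xv (a + b) - Xv a - Xv b) \<in> symI scale"
| gen_scale: "r * (Xv (scale c a) - Cst c * Xv a) \<in> symI scale"

definition eqS :: "('k::field \<Rightarrow> 'l::ab_group_add \<Rightarrow> 'l) \<Rightarrow> ('l multiset \<Rightarrow>\<^sub>0 'k) \<Rightarrow> ('l multiset \<Rightarrow>\<^sub>0 'k) \<Rightarrow> bool" where
  "eqS scale p q \<longleftrightarrow> p - q \<in> symI scale"

text \<open>Extended action l \<curvearrowleft> (l_1 ... l_n), with the list given in reverse order:
  actr pl a (l_n # rev [l_1,...,l_{n-1}]).\<close>
function actr :: "('l \<Rightarrow> 'l \<Rightarrow> 'l::ab_group_add) \<Rightarrow> 'l \<Rightarrow> 'l list \<Rightarrow> 'l" where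
  "actr pl a [] = a"
| "actr pl a (y # xs) = pl (actr pl a xs) y - (\<Sum>i<length xs. actr pl a (xs[i := pl (xs ! i) y]))"
  by pat_completeness auto
termination by (relation "measure (\<lambda>(pl, a, ys). length ys)") auto

definition act :: "('l \<Rightarrow> 'l \<Rightarrow> 'l::ab_group_add) \<Rightarrow> 'l \<Rightarrow> 'l list \<Rightarrow> 'l" where
  "act pl a ys = actr pl a (rev ys)"

definition blk :: "nat list \<Rightarrow> 'l list \<Rightarrow> nat \<Rightarrow> 'l list" where
  "blk fs bs i = map snd (filter (\<lambda>(f, b). f = i) (zip fs bs))"

definition go_mon :: "('l \<Rightarrow> 'l \<Rightarrow> 'l::ab_group_add) \<Rightarrow> 'l list \<Rightarrow> 'l list \<Rightarrow> ('l multiset \<Rightarrow>\<^sub>0 'k::comm_ring_1)" where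
  "go_mon pl as bs =
     (\<Sum>fs\<in>{fs. length fs = length bs \<and> set fs \<subseteq> {0..length as}}.
        mon (blk fs bs 0) * (\<Prod>i\<in>{1..length as}. Xv (act pl (as ! (i - 1)) (blk fs bs i))))"

definition lst :: "'l multiset \<Rightarrow> 'l list" where
  "lst m = (SOME xs. mset xs = m)"

definition gop :: "('l \<Rightarrow> 'l \<Rightarrow> 'l::ab_group_add) \<Rightarrow> ('l multiset \<Rightarrow>\<^sub>0 'k::comm_ring_1)
     \<Rightarrow> ('l multiset \<Rightarrow>\<^sub>0 'k) \<Rightarrow> ('l multiset \<Rightarrow>\<^sub>0 'k)" where
  "gop pl p q = (\<Sum>m\<in>Poly_Mapping.keys p. \<Sum>m'\<in>Poly_Mapping.keys q.
      Cst (Poly_Mapping.lookup p m * Poly_Mapping.lookup q m') * go_mon pl (lst m) (lst m'))"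

text \<open>l_P for a block P of indices into ls (0-based).\<close>
definition lP :: "('l \<Rightarrow> 'l \<Rightarrow> 'l::ab_group_add) \<Rightarrow> 'l list \<Rightarrow> nat set \<Rightarrow> 'l" where
  "lP pl ls P = (\<Sum>qs\<in>permutations_of_set (P - {Max P}).
       foldr (\<lambda>i acc. pl (ls ! i) acc) qs (ls ! Max P))"

definition ordered_blocks :: "nat set set \<Rightarrow> nat set list" where
  "ordered_blocks P = map (\<lambda>m. THE B. B \<in> P \<and> Max B = m) (sorted_list_of_set (Max ` P))"

end

theory Submission
  imports Defs
begin


abbreviation N :: "'l multiset \<Rightarrow> ('l multiset \<Rightarrow>\<^sub>0 'k::comm_semiring_1)" where
  "N m \<equiv> Poly_Mapping.single m 1"

lemma Xv_mult_N: "Xv a * N m = N (add_mset a m)"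
  by (simp add: Xv_def mult_single)

lemma N_mult_Xv: "N m * Xv a = (N (add_mset a m) :: ('l multiset \<Rightarrow>\<^sub>0 'k::comm_semiring_1))"
  by (simp add: Xv_def mult_single)

lemma prod_list_map_nth: "prod_list (map g xs) = (\<Prod>i<length xs. (g (xs ! i) :: 'a::comm_monoid_mult))"
  by (induction xs) (simp_all add: prod.lessThan_Suc_shift del: prod.lessThan_Suc)

lemma mon_eq: "mon xs = N (mset xs)"
  by (induction xs) (simp_all add: mon_def Xv_mult_N)

lemma Cst_mult_single: "Cst c * Poly_Mapping.single m d = Poly_Mapping.single m (c * d)"
  by (simp add: Cst_def mult_single)

lemma Cst_add: "Cst (a + b) = Cst a + Cst b"
  by (simp add: Cst_def single_add)

lemma Cst_zero[simp]: "Cst 0 = 0"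
  by (simp add: Cst_def)

lemma Cst_one[simp]: "Cst 1 = 1"
  by (simp add: Cst_def)

lemma Cst_mult: "Cst (a * b) = Cst a * Cst b"
  by (simp add: Cst_def mult_single)

lemma poly_expand: "p = (\<Sum>m\<in>Poly_Mapping.keys p. Poly_Mapping.single m (Poly_Mapping.lookup p m))"
proof (rule poly_mapping_eqI)
  fix k
  show "Poly_Mapping.lookup p k = Poly_Mapping.lookup (\<Sum>m\<in>Poly_Mapping.keys p. Poly_Mapping.single m (Poly_Mapping.lookup p m)) k"
    by (simp add: lookup_sum lookup_single when_def in_keys_iff)
qed

lemma mset_lst: "mset (lst m) = m"
  unfolding lst_def by (rule someI_ex) (rule ex_mset)

lemma lst_single: "lst {#z#} = [z]"
  using mset_lst[of "{#z#}"] by simp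

lemma act_nil: "act pl a [] = a"
  by (simp add: act_def)

lemma act_single: "act pl a [z] = pl a z"
  by (simp add: act_def)

definition Tm :: "('l \<Rightarrow> 'l \<Rightarrow> 'l::ab_group_add) \<Rightarrow> 'l \<Rightarrow> 'l multiset \<Rightarrow> ('l multiset \<Rightarrow>\<^sub>0 'k::comm_ring_1)" where
  "Tm pl z m = (\<Sum>a\<in>#m. N (add_mset (pl a z) (m - {#a#})))"

definition Gm :: "('l \<Rightarrow> 'l \<Rightarrow> 'l::ab_group_add) \<Rightarrow> 'l \<Rightarrow> 'l multiset \<Rightarrow> ('l multiset \<Rightarrow>\<^sub>0 'k::comm_ring_1)" where
  "Gm pl z m = N (add_mset z m) + Tm pl z m"

lemma blk_single: "blk [j] [z] i = (if j = i then [z] else [])"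
  by (simp add: blk_def)

lemma go_mon_single: "go_mon pl as [z] = (Gm pl z (mset as) :: ('l::ab_group_add multiset \<Rightarrow>\<^sub>0 'k::comm_ring_1))"
proof -
  let ?n = "length as"
  have fs: "{fs. length fs = length [z] \<and> set fs \<subseteq> {0..?n}} = (\<lambda>j. [j]) ` {0..?n}"
    by (auto simp: length_Suc_conv)
  let ?t = "\<lambda>fs. (mon (blk fs [z] 0) * (\<Prod>i\<in>{1..?n}. Xv (act pl (as ! (i - 1)) (blk fs [z] i)))
     :: ('l multiset \<Rightarrow>\<^sub>0 'k))"
  have "go_mon pl as [z] = sum ?t ((\<lambda>j. [j]) ` {0..?n})"
    unfolding go_mon_def fs ..
  also have "\<dots> = (\<Sum>j\<in>{0..?n}. ?t [j])"
    by (subst sum.reindex) (auto simp: inj_on_def)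
  also have "\<dots> = ?t [0] + (\<Sum>j\<in>{1..?n}. ?t [j])"
    by (simp add: sum.atLeast_Suc_atMost)
  also have "?t [0] = N (add_mset z (mset as))"
  proof -
    have "(\<Prod>i\<in>{1..?n}. Xv (act pl (as ! (i - 1)) (blk [0] [z] i))) = (\<Prod>i<?n. (Xv (as ! i) :: ('l multiset \<Rightarrow>\<^sub>0 'k)))"
      by (rule prod.reindex_bij_witness[where i="\<lambda>i. i + 1" and j="\<lambda>i. i - 1"])
         (auto simp: blk_single act_nil)
    also have "\<dots> = mon as"
      by (simp add: mon_def prod_list_map_nth)
    finally show ?thesis by (simp add: blk_single mon_eq Xv_mult_N mon_def[of "[z]"] mult_single)
  qed
  also have "(\<Sum>j\<in>{1..?n}. ?t [j]) = Tm pl z (mset as)"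
  proof -
    have tj: "?t [j] = mon (as[j - 1 := pl (as ! (j - 1)) z])" if "j \<in> {1..?n}" for j
    proof -
      have "(\<Prod>i\<in>{1..?n}. Xv (act pl (as ! (i - 1)) (blk [j] [z] i))) = (\<Prod>i<?n. (Xv (as[j - 1 := pl (as ! (j - 1)) z] ! i) :: ('l multiset \<Rightarrow>\<^sub>0 'k)))"
        by (rule prod.reindex_bij_witness[where i="\<lambda>i. i + 1" and j="\<lambda>i. i - 1"])
           (use that in \<open>auto simp: blk_single act_nil act_single nth_list_update\<close>)
      also have "\<dots> = mon (as[j - 1 := pl (as ! (j - 1)) z])"
        by (simp add: mon_def prod_list_map_nth)
      finally show ?thesis using that by (simp add: blk_single mon_def)
    qed
    have "(\<Sum>j\<in>{1..?n}. ?t [j]) = (\<Sum>j\<in>{1..?n}. mon (as[j - 1 := pl (as ! (j - 1)) z]))"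
      by (rule sum.cong) (simp_all only: tj)
    also have "\<dots> = (\<Sum>j<?n. mon (as[j := pl (as ! j) z]))"
      by (rule sum.reindex_bij_witness[where i="\<lambda>i. i + 1" and j="\<lambda>i. i - 1"]) auto
    also have "\<dots> = (\<Sum>j<?n. N (add_mset (pl (as ! j) z) (mset as - {#as ! j#})))"
      by (rule sum.cong) (auto simp: mon_eq mset_update)
    also have "\<dots> = sum_list (map (\<lambda>a. N (add_mset (pl a z) (mset as - {#a#}))) as)"
      by (simp add: sum_list_sum_nth atLeast0LessThan)
    also have "\<dots> = Tm pl z (mset as)"
      unfolding Tm_def by (simp only: sum_mset_sum_list[symmetric] mset_map)
    finally show ?thesis .
  qed
  finally show ?thesis by (simp add: Gm_def)
qed

lemma lookup_Cst_mult: "Poly_Mapping.lookup (Cst c * p) m = c * Poly_Mapping.lookup p m"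
proof -
  have "Cst c * p = Poly_Mapping.map ((*) c) p"
    by (simp add: Cst_def mult_map_scale_conv_mult)
  then show ?thesis by (simp add: map.rep_eq when_def)
qed

lemma keys_Cst_mult: "Poly_Mapping.keys (Cst c * p) \<subseteq> Poly_Mapping.keys p"
  by (auto simp: in_keys_iff lookup_Cst_mult)

definition Phi :: "('l \<Rightarrow> 'l \<Rightarrow> 'l::ab_group_add) \<Rightarrow> 'l \<Rightarrow> ('l multiset \<Rightarrow>\<^sub>0 'k::comm_ring_1) \<Rightarrow> ('l multiset \<Rightarrow>\<^sub>0 'k)" where
  "Phi pl z p = (\<Sum>m\<in>Poly_Mapping.keys p. Cst (Poly_Mapping.lookup p m) * Gm pl z m)"

lemma gop_Xv: "gop pl p (Xv z) = Phi pl z (p :: 'l::ab_group_add multiset \<Rightarrow>\<^sub>0 'k::field)"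
  by (simp add: gop_def Phi_def Xv_def lst_single go_mon_single mset_lst)

lemma Phi_superset:
  assumes "finite S" "Poly_Mapping.keys p \<subseteq> S"
  shows "Phi pl z p = (\<Sum>m\<in>S. Cst (Poly_Mapping.lookup p m) * Gm pl z m)"
  unfolding Phi_def
  by (rule sum.mono_neutral_left) (use assms in \<open>auto simp: in_keys_iff\<close>)

lemma Phi_add: "Phi pl z (p + q) = Phi pl z p + Phi pl z q"
proof -
  let ?S = "Poly_Mapping.keys p \<union> Poly_Mapping.keys q"
  have f: "finite ?S" by simp
  have "Phi pl z (p + q) = (\<Sum>m\<in>?S. Cst (Poly_Mapping.lookup (p + q) m) * Gm pl z m)"
    by (rule Phi_superset[OF f]) (rule keys_add)
  also have "\<dots> = (\<Sum>m\<in>?S. Cst (Poly_Mapping.lookup p m) * Gm pl z m) + (\<Sum>m\<in>?S. Cst (Poly_Mapping.lookup q m) * Gm pl z m)"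
    by (simp add: lookup_add Cst_add distrib_right sum.distrib)
  also have "\<dots> = Phi pl z p + Phi pl z q"
    by (simp add: Phi_superset[OF f])
  finally show ?thesis .
qed

lemma Phi_zero[simp]: "Phi pl z 0 = 0"
  by (simp add: Phi_def)

lemma Phi_uminus: "Phi pl z (- p) = - Phi pl z p"
  using Phi_add[of pl z p "- p"] by (simp add: eq_neg_iff_add_eq_0 add.commute)

lemma Phi_diff: "Phi pl z (p - q) = Phi pl z p - Phi pl z q"
  using Phi_add[of pl z p "- q"] by (simp add: Phi_uminus)

lemma Phi_sum: "Phi pl z (sum g A) = (\<Sum>a\<in>A. Phi pl z (g a))"
  by (induction A rule: infinite_finite_induct) (simp_all add: Phi_add)

lemma Phi_Cst: "Phi pl z (Cst c * p) = Cst c * Phi pl z p"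
proof -
  have "Phi pl z (Cst c * p) = (\<Sum>m\<in>Poly_Mapping.keys p. Cst (Poly_Mapping.lookup (Cst c * p) m) * Gm pl z m)"
    by (rule Phi_superset) (simp_all add: keys_Cst_mult)
  also have "\<dots> = Cst c * Phi pl z p"
    by (simp add: Phi_def lookup_Cst_mult Cst_mult sum_distrib_left mult.assoc)
  finally show ?thesis .
qed

lemma Phi_single: "Phi pl z (Poly_Mapping.single m c) = Cst c * Gm pl z m"
  by (simp add: Phi_def)




lemma symI_mult: "p \<in> symI scale \<Longrightarrow> q * p \<in> symI scale"
proof (induction rule: symI.induct)
  case zero then show ?case by (simp add: symI.zero)
next
  case (add p p') then show ?case by (simp add: distrib_left symI.add)
next
  case (gen_add r a b)
  have "(q * r) * (Xv (a + b) - Xv a - Xv b) \<in> symI scale" by (rule symI.gen_add)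
  then show ?case by (simp only: mult.assoc)
next
  case (gen_scale r c a)
  have "(q * r) * (Xv (scale c a) - Cst c * Xv a) \<in> symI scale" by (rule symI.gen_scale)
  then show ?case by (simp only: mult.assoc)
qed

lemma symI_uminus: "p \<in> symI scale \<Longrightarrow> - p \<in> symI scale"
proof -
  assume "p \<in> symI scale"
  then have "(-1) * p \<in> symI scale" by (rule symI_mult)
  then show ?thesis by simp
qed

lemma symI_diff: "p \<in> symI scale \<Longrightarrow> q \<in> symI scale \<Longrightarrow> p - q \<in> symI scale"
proof -
  assume "p \<in> symI scale" "q \<in> symI scale"
  then have "p + (- q) \<in> symI scale" by (intro symI.add symI_uminus)
  then show ?thesis by (simp only: diff_conv_add_uminus)
qed

lemma symI_sum: "(\<And>a. a \<in> A \<Longrightarrow> g a \<in> symI scale) \<Longrightarrow> sum g A \<in> symI scale"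
  by (induction A rule: infinite_finite_induct) (simp_all add: symI.zero symI.add)

lemma Tm_add: "(Tm pl z (add_mset x m) :: 'l::ab_group_add multiset \<Rightarrow>\<^sub>0 'k::comm_ring_1) = Tm pl z m * Xv x + N m * Xv (pl x z)"
proof -
  have "Tm pl z (add_mset x m) = N (add_mset (pl x z) m) + (\<Sum>a\<in>#m. (N (add_mset (pl a z) (add_mset x m - {#a#})) :: 'l multiset \<Rightarrow>\<^sub>0 'k))"
    by (simp add: Tm_def)
  also have "(\<Sum>a\<in>#m. (N (add_mset (pl a z) (add_mset x m - {#a#})) :: 'l multiset \<Rightarrow>\<^sub>0 'k)) = (\<Sum>a\<in>#m. N (add_mset (pl a z) (m - {#a#})) * Xv x)"
  proof (rule arg_cong[where f=sum_mset], rule image_mset_cong)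
    fix a assume "a \<in># m"
    then have "add_mset x m - {#a#} = add_mset x (m - {#a#})" by (simp add: insert_DiffM2)
    then show "(N (add_mset (pl a z) (add_mset x m - {#a#})) :: 'l multiset \<Rightarrow>\<^sub>0 'k) = N (add_mset (pl a z) (m - {#a#})) * Xv x"
      by (simp only: N_mult_Xv add_mset_commute)
  qed
  also have "\<dots> = Tm pl z m * Xv x"
    by (simp only: Tm_def sum_mset_distrib_right)
  finally show ?thesis by (simp add: N_mult_Xv add.commute)
qed

lemma Gm_add: "(Gm pl z (add_mset x m) :: 'l::ab_group_add multiset \<Rightarrow>\<^sub>0 'k::comm_ring_1) = Gm pl z m * Xv x + N m * Xv (pl x z)"
proof -
  have "(N (add_mset z (add_mset x m)) :: 'l multiset \<Rightarrow>\<^sub>0 'k) = N (add_mset z m) * Xv x"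
    by (simp only: N_mult_Xv add_mset_commute)
  then show ?thesis by (simp add: Gm_def Tm_add distrib_right)
qed

lemma Phi_mult_gen:
  assumes "\<And>m. Phi pl z (N m * g) \<in> symI scale"
  shows "Phi pl z (r * g) \<in> symI scale"
proof -
  have "r * g = (\<Sum>m\<in>Poly_Mapping.keys r. Poly_Mapping.single m (Poly_Mapping.lookup r m) * g)"
    by (subst poly_expand[of r]) (simp add: sum_distrib_right)
  also have "\<dots> = (\<Sum>m\<in>Poly_Mapping.keys r. Cst (Poly_Mapping.lookup r m) * (N m * g))"
    by (simp add: Cst_mult_single flip: mult.assoc)
  finally show ?thesis
    by (simp add: Phi_sum Phi_Cst symI_sum symI_mult assms)
qed



locale PL =
  fixes scale :: "'k::field \<Rightarrow> 'l::ab_group_add \<Rightarrow> 'l" and pl :: "'l \<Rightarrow> 'l \<Rightarrow> 'l"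
  assumes rpl: "right_pre_Lie scale pl"
begin

lemma pl_add1: "pl (x + y) z = pl x z + pl y z"
  using rpl by (simp add: right_pre_Lie_def)

lemma pl_add2: "pl x (y + z) = pl x y + pl x z"
  using rpl by (simp add: right_pre_Lie_def)

lemma pl_scale1: "pl (scale c x) y = scale c (pl x y)"
  using rpl by (simp add: right_pre_Lie_def)

lemma pl_zero2: "pl x 0 = 0"
  using pl_add2[of x 0 0] by simp

lemma pl_sum2: "pl x (sum g A) = (\<Sum>a\<in>A. pl x (g a))"
  by (induction A rule: infinite_finite_induct) (simp_all add: pl_zero2 pl_add2)

lemma Phi_symI: "p \<in> symI scale \<Longrightarrow> Phi pl z (p :: 'l multiset \<Rightarrow>\<^sub>0 'k) \<in> symI scale"
proof (induction rule: symI.induct)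
  case zero then show ?case by (simp add: symI.zero)
next
  case (add p p') then show ?case by (simp add: Phi_add symI.add)
next
  case (gen_add r a b)
  show ?case
  proof (rule Phi_mult_gen)
    fix m
    have "N m * (Xv (a + b) - Xv a - Xv b) = (N (add_mset (a + b) m) - N (add_mset a m) - N (add_mset b m) :: 'l multiset \<Rightarrow>\<^sub>0 'k)"
      by (simp add: right_diff_distrib N_mult_Xv)
    then have "Phi pl z (N m * (Xv (a + b) - Xv a - Xv b) :: 'l multiset \<Rightarrow>\<^sub>0 'k) =
      Gm pl z (add_mset (a + b) m) - Gm pl z (add_mset a m) - Gm pl z (add_mset b m)"
      by (simp add: Phi_diff Phi_single)
    also have "\<dots> = Gm pl z m * (Xv (a + b) - Xv a - Xv b) + N m * (Xv (pl a z + pl b z) - Xv (pl a z) - Xv (pl b z))"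
      unfolding Gm_add pl_add1 by (simp add: right_diff_distrib)
    finally have "Phi pl z (N m * (Xv (a + b) - Xv a - Xv b) :: 'l multiset \<Rightarrow>\<^sub>0 'k) =
      Gm pl z m * (Xv (a + b) - Xv a - Xv b) + N m * (Xv (pl a z + pl b z) - Xv (pl a z) - Xv (pl b z))" .
    then show "Phi pl z (N m * (Xv (a + b) - Xv a - Xv b)) \<in> symI scale"
      by (simp add: symI.add symI.gen_add)
  qed
next
  case (gen_scale r c a)
  show ?case
  proof (rule Phi_mult_gen)
    fix m
    have e: "N m * Cst c * Xv a = Poly_Mapping.single (add_mset a m) c"
      by (simp add: Cst_def Xv_def mult_single)
    have "N m * (Xv (scale c a) - Cst c * Xv a) = (N (add_mset (scale c a) m) - Cst c * N (add_mset a m) :: 'l multiset \<Rightarrow>\<^sub>0 'k)"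
      by (simp add: right_diff_distrib N_mult_Xv mult.left_commute[of "N m"])
    then have "Phi pl z (N m * (Xv (scale c a) - Cst c * Xv a) :: 'l multiset \<Rightarrow>\<^sub>0 'k) =
      Gm pl z (add_mset (scale c a) m) - Cst c * Gm pl z (add_mset a m)"
      by (simp add: Phi_diff Phi_single Phi_Cst)
    also have "\<dots> = Gm pl z m * (Xv (scale c a) - Cst c * Xv a) + N m * (Xv (scale c (pl a z)) - Cst c * Xv (pl a z))"
      unfolding Gm_add pl_scale1 by (simp add: right_diff_distrib distrib_left mult.left_commute[of "Cst c"])
    finally have "Phi pl z (N m * (Xv (scale c a) - Cst c * Xv a) :: 'l multiset \<Rightarrow>\<^sub>0 'k) =
      Gm pl z m * (Xv (scale c a) - Cst c * Xv a) + N m * (Xv (scale c (pl a z)) - Cst c * Xv (pl a z))" .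
    then show "Phi pl z (N m * (Xv (scale c a) - Cst c * Xv a)) \<in> symI scale"
      by (simp add: symI.add symI.gen_scale)
  qed
qed

end




lemma finite_partitions: "finite I \<Longrightarrow> finite {P. partition_on I P}"
  by (rule finite_subset[of _ "Pow (Pow I)"]) (auto simp: partition_on_def)

lemma card_partition_le:
  assumes "finite I" "partition_on I P" shows "card P \<le> card I"
proof -
  have fin: "finite B" if "B \<in> P" for B
    using assms that by (auto simp: partition_on_def intro: finite_subset)
  have "card I = (\<Sum>B\<in>P. card B)"
  proof -
    have e: "sum (\<lambda>_. 1::nat) = card" by (rule ext) (rule card_eq_sum[symmetric])
    show ?thesis using sum.partition[OF assms, of "\<lambda>_. 1::nat"] unfolding e .
  qed
  also have "\<dots> \<ge> (\<Sum>B\<in>P. 1)"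
    by (rule sum_mono) (use assms fin in \<open>auto simp: partition_on_def Suc_le_eq card_gt_0_iff\<close>)
  finally show ?thesis by simp
qed

lemma partition_insert_block:
  assumes "partition_on (I - B) Q" "B \<subseteq> I" "B \<noteq> {}"
  shows "partition_on I (insert B Q)"
proof -
  have "disjnt B (\<Union>Q)" using assms(1) by (auto simp: partition_on_def disjnt_def)
  then show ?thesis using assms by (simp add: partition_on_insert Diff_partition)
qed

lemma block_not_in:
  assumes "partition_on (I - B) Q" "B \<noteq> {}"
  shows "B \<notin> Q"
  using assms by (auto simp: partition_on_def)

lemma block_of_insert:
  assumes "partition_on (I - B) Q" "n \<in> B"
  shows "(THE B'. B' \<in> insert B Q \<and> n \<in> B') = B"
  using assms by (intro the_equality) (auto simp: partition_on_def)

lemma block_of_partition: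
  assumes "partition_on I P" "n \<in> I"
  defines "B \<equiv> THE B. B \<in> P \<and> n \<in> B"
  shows "B \<in> P" "n \<in> B" "B \<subseteq> I" "partition_on (I - B) (P - {B})" "insert B (P - {B}) = P"
proof -
  have ex: "\<exists>!B. B \<in> P \<and> n \<in> B"
    using assms(1,2) by (auto simp: partition_on_def disjoint_def)
  then show B: "B \<in> P" "n \<in> B" unfolding B_def by (metis (mono_tags, lifting) theI)+
  then show "B \<subseteq> I" using assms(1) by (auto simp: partition_on_def)
  show ins: "insert B (P - {B}) = P" using B by blast
  have "disjnt B (\<Union>(P - {B}))"
    using assms(1) B by (auto simp: partition_on_def disjoint_def disjnt_def)
  then show "partition_on (I - B) (P - {B})"
    using assms(1) partition_on_insert[of B "P - {B}" I] ins by simp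
qed

lemma sum_partitions_split:
  assumes "finite I" "n \<in> I"
  shows "(\<Sum>P\<in>{P. partition_on I P}. h P) =
    (\<Sum>B\<in>{B. B \<subseteq> I \<and> n \<in> B}. \<Sum>Q\<in>{Q. partition_on (I - B) Q}. h (insert B Q))"
proof -
  have finB: "finite {B. B \<subseteq> I \<and> n \<in> B}" using assms by auto
  have "(\<Sum>B\<in>{B. B \<subseteq> I \<and> n \<in> B}. \<Sum>Q\<in>{Q. partition_on (I - B) Q}. h (insert B Q)) =
     (\<Sum>(B, Q)\<in>(SIGMA B:{B. B \<subseteq> I \<and> n \<in> B}. {Q. partition_on (I - B) Q}). h (insert B Q))"
    by (rule sum.Sigma) (use finB assms in \<open>auto intro: finite_partitions\<close>)
  also have "\<dots> = (\<Sum>P\<in>{P. partition_on I P}. h P)"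
  proof (rule sum.reindex_bij_witness[where i="\<lambda>P. (THE B. B \<in> P \<and> n \<in> B, P - {THE B. B \<in> P \<and> n \<in> B})"
        and j="\<lambda>(B, Q). insert B Q"], goal_cases)
    case (1 BQ)
    then obtain B Q where BQ: "BQ = (B, Q)" "B \<subseteq> I" "n \<in> B" "partition_on (I - B) Q" by auto
    have th: "(THE B'. B' \<in> insert B Q \<and> n \<in> B') = B" by (rule block_of_insert[OF BQ(4,3)])
    have nin: "B \<notin> Q" using block_not_in[OF BQ(4)] BQ(3) by auto
    show ?case using th nin BQ(1) by simp
  next
    case (2 BQ)
    then obtain B Q where BQ: "BQ = (B, Q)" "B \<subseteq> I" "n \<in> B" "partition_on (I - B) Q" by auto
    show ?case using partition_insert_block[OF BQ(4,2)] BQ by auto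
  next
    case (3 P)
    then have P: "partition_on I P" by simp
    note bp = block_of_partition[OF P assms(2)]
    show ?case using bp(5) by simp
  next
    case (4 P)
    then have P: "partition_on I P" by simp
    note bp = block_of_partition[OF P assms(2)]
    show ?case using bp(2,3,4) by simp
  next
    case (5 BQ)
    then show ?case by auto
  qed
  finally show ?thesis by simp
qed




lemma insort_last: "(\<forall>x\<in>set xs. x < (n::nat)) \<Longrightarrow> insort n xs = xs @ [n]"
  by (induction xs) auto

lemma sorted_list_insert_max:
  assumes "finite S" "\<forall>s\<in>S. s < (n::nat)"
  shows "sorted_list_of_set (insert n S) = sorted_list_of_set S @ [n]"
proof -
  have "n \<notin> S" using assms by auto
  then show ?thesis using assms by (simp add: sorted_list_of_set_insert insort_last)
qed

lemma ordered_blocks_insert: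
  assumes Q: "partition_on (I - B) Q" and I: "finite I" and B: "B \<subseteq> I" "n \<in> B"
    and n: "\<forall>x\<in>I. x \<le> n"
  shows "ordered_blocks (insert B Q) = ordered_blocks Q @ [B]"
proof -
  have finB: "finite B" using B I by (auto intro: finite_subset)
  have MB: "Max B = n" using B n finB by (intro Max_eqI) auto
  have QI: "\<forall>C\<in>Q. C \<subseteq> I - B \<and> C \<noteq> {}" using Q by (auto simp: partition_on_def)
  have finQ: "finite Q" using Q I by (metis finite_Diff finite_UnionD partition_onD1)
  have less: "Max C < n" if "C \<in> Q" for C
  proof -
    have C: "C \<subseteq> I - B" "C \<noteq> {}" using QI that by auto
    have fC: "finite C" using C I by (auto intro: finite_subset)
    have "Max C \<in> C" using fC C by simp
    then show ?thesis using C B n by (metis Diff_iff le_neq_implies_less subsetD)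
  qed
  have img: "Max ` insert B Q = insert n (Max ` Q)" using MB by simp
  have sl: "sorted_list_of_set (Max ` insert B Q) = sorted_list_of_set (Max ` Q) @ [n]"
    unfolding img by (rule sorted_list_insert_max) (use finQ less in auto)
  have eqm: "(THE C. C \<in> insert B Q \<and> Max C = m) = (THE C. C \<in> Q \<and> Max C = m)" if "m \<in> set (sorted_list_of_set (Max ` Q))" for m
  proof -
    have "m \<in> Max ` Q" using that finQ by simp
    then have "m \<noteq> n" using less by auto
    then have "\<And>C. (C \<in> insert B Q \<and> Max C = m) = (C \<in> Q \<and> Max C = m)" using MB by auto
    then show ?thesis by simp
  qed
  have eqn: "(THE C. C \<in> insert B Q \<and> Max C = n) = B"
  proof (rule the_equality)
    show "B \<in> insert B Q \<and> Max B = n" using MB by simp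
  next
    fix C assume "C \<in> insert B Q \<and> Max C = n"
    then show "C = B" using less by (metis insertE less_irrefl)
  qed
  show ?thesis
    unfolding ordered_blocks_def sl using eqm eqn by simp
qed

lemma lP_single: "lP pl ls {n} = ls ! n"
  by (simp add: lP_def)

context PL
begin

lemma lP_rec:
  assumes fB: "finite B" and n: "n \<in> B" "\<forall>x\<in>B. x \<le> n" and ne: "B \<noteq> {n}"
  shows "lP pl ls B = (\<Sum>i\<in>B - {n}. pl (ls ! i) (lP pl ls (B - {i})))"
proof -
  have MB: "Max B = n" using fB n by (intro Max_eqI) auto
  have MBi: "Max (B - {i}) = n" if "i \<in> B - {n}" for i
    using fB n that by (intro Max_eqI) auto
  let ?F = "\<lambda>qs. foldr (\<lambda>i acc. pl (ls ! i) acc) qs (ls ! n)"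
  have ne': "B - {n} \<noteq> {}" using n ne by auto
  have "lP pl ls B = sum ?F (\<Union>i\<in>B - {n}. (#) i ` permutations_of_set (B - {n} - {i}))"
    unfolding lP_def MB permutations_of_set_nonempty[OF ne'] ..
  also have "\<dots> = (\<Sum>i\<in>B - {n}. sum ?F ((#) i ` permutations_of_set (B - {n} - {i})))"
    by (rule sum.UNION_disjoint) (use fB in auto)
  also have "\<dots> = (\<Sum>i\<in>B - {n}. \<Sum>qs\<in>permutations_of_set (B - {n} - {i}). pl (ls ! i) (?F qs))"
    by (rule sum.cong) (simp_all add: sum.reindex)
  also have "\<dots> = (\<Sum>i\<in>B - {n}. pl (ls ! i) (lP pl ls (B - {i})))"
  proof (rule sum.cong)
    fix i assume i: "i \<in> B - {n}"
    have "B - {i} - {Max (B - {i})} = B - {n} - {i}" using MBi[OF i] by auto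
    then show "(\<Sum>qs\<in>permutations_of_set (B - {n} - {i}). pl (ls ! i) (?F qs)) = pl (ls ! i) (lP pl ls (B - {i}))"
      unfolding lP_def pl_sum2 using MBi[OF i] by simp
  qed simp
  finally show ?thesis .
qed

end




lemma eqS_refl: "eqS scale p p"
  by (simp add: eqS_def symI.zero)

lemma eqS_sym: "eqS scale p q \<Longrightarrow> eqS scale q p"
  unfolding eqS_def using symI_uminus by fastforce

lemma eqS_trans[trans]: "eqS scale p q \<Longrightarrow> eqS scale q r \<Longrightarrow> eqS scale p r"
  unfolding eqS_def using symI.add by fastforce

lemma eqS_add: "eqS scale p q \<Longrightarrow> eqS scale p' q' \<Longrightarrow> eqS scale (p + p') (q + q')"
proof -
  assume "eqS scale p q" "eqS scale p' q'"
  then have "(p - q) + (p' - q') \<in> symI scale" unfolding eqS_def by (rule symI.add)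
  then show ?thesis unfolding eqS_def by (simp add: algebra_simps)
qed

lemma eqS_mult: "eqS scale p q \<Longrightarrow> eqS scale (r * p) (r * q)"
proof -
  assume "eqS scale p q"
  then have "r * (p - q) \<in> symI scale" unfolding eqS_def by (rule symI_mult)
  then show ?thesis unfolding eqS_def by (simp add: algebra_simps)
qed

lemma eqS_sum: "(\<And>a. a \<in> A \<Longrightarrow> eqS scale (f a) (g a)) \<Longrightarrow> eqS scale (sum f A) (sum g A)"
  by (induction A rule: infinite_finite_induct) (simp_all add: eqS_refl eqS_add)

lemma Xv_zero: "Xv 0 \<in> symI scale"
proof -
  have "1 * (Xv (0 + 0) - Xv 0 - Xv 0) \<in> symI scale" by (rule symI.gen_add)
  then have "- Xv 0 \<in> symI scale" by simp
  from symI_uminus[OF this] show ?thesis by simp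
qed

lemma Xv_sum: "eqS scale (Xv (sum g A)) (\<Sum>a\<in>A. Xv (g a))"
proof (induction A rule: infinite_finite_induct)
  case (infinite A) then show ?case using Xv_zero by (simp add: eqS_def)
next
  case empty then show ?case using Xv_zero by (simp add: eqS_def)
next
  case (insert x F)
  have "eqS scale (Xv (g x + sum g F)) (Xv (g x) + Xv (sum g F))"
  proof -
    have "1 * (Xv (g x + sum g F) - Xv (g x) - Xv (sum g F)) \<in> symI scale" by (rule symI.gen_add)
    then show ?thesis by (simp add: eqS_def algebra_simps)
  qed
  also have "eqS scale (Xv (g x) + Xv (sum g F)) (Xv (g x) + (\<Sum>a\<in>F. Xv (g a)))"
    by (rule eqS_add[OF eqS_refl insert.IH])
  finally show ?case using insert by simp
qed




definition FO :: "('l \<Rightarrow> 'l \<Rightarrow> 'l::ab_group_add) \<Rightarrow> 'l list \<Rightarrow> nat set set \<Rightarrow> ('l multiset \<Rightarrow>\<^sub>0 'k::comm_ring_1)" where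
  "FO pl ls P = foldl (\<lambda>acc x. gop pl acc (Xv x)) 1 (map (lP pl ls) (ordered_blocks P))"

definition R :: "('l \<Rightarrow> 'l \<Rightarrow> 'l::ab_group_add) \<Rightarrow> 'l list \<Rightarrow> nat set \<Rightarrow> ('l multiset \<Rightarrow>\<^sub>0 'k::comm_ring_1)" where
  "R pl ls I = (\<Sum>P\<in>{P. partition_on I P}. Cst ((-1) ^ (card I - card P)) * FO pl ls P)"

definition F :: "'l list \<Rightarrow> nat set \<Rightarrow> 'l multiset" where
  "F ls J = image_mset (nth ls) (mset_set J)"

definition sg :: "nat set \<Rightarrow> 'k::comm_ring_1" where
  "sg B = (-1) ^ (card B - 1)"

lemma FO_insert:
  assumes "partition_on (I - B) Q" "finite I" "B \<subseteq> I" "n \<in> B" "\<forall>x\<in>I. x \<le> n"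
  shows "(FO pl ls (insert B Q) :: 'l::ab_group_add multiset \<Rightarrow>\<^sub>0 'k::field) = Phi pl (lP pl ls B) (FO pl ls Q)"
  unfolding FO_def ordered_blocks_insert[OF assms] by (simp add: gop_Xv)

lemma R_split:
  assumes I: "finite I" "n \<in> I" "\<forall>x\<in>I. x \<le> n"
  shows "(R pl ls I :: 'l::ab_group_add multiset \<Rightarrow>\<^sub>0 'k::field) =
    (\<Sum>B\<in>{B. B \<subseteq> I \<and> n \<in> B}. Cst (sg B) * Phi pl (lP pl ls B) (R pl ls (I - B)))"
proof -
  have "R pl ls I = (\<Sum>B\<in>{B. B \<subseteq> I \<and> n \<in> B}. \<Sum>Q\<in>{Q. partition_on (I - B) Q}.
      (Cst ((-1) ^ (card I - card (insert B Q))) * FO pl ls (insert B Q) :: 'l multiset \<Rightarrow>\<^sub>0 'k))"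
    unfolding R_def by (rule sum_partitions_split[OF I(1,2)])
  also have "\<dots> = (\<Sum>B\<in>{B. B \<subseteq> I \<and> n \<in> B}. Cst (sg B) * Phi pl (lP pl ls B) (R pl ls (I - B)))"
  proof (rule sum.cong[OF refl])
    fix B assume "B \<in> {B. B \<subseteq> I \<and> n \<in> B}"
    then have B: "B \<subseteq> I" "n \<in> B" by auto
    have fB: "finite B" using B I by (auto intro: finite_subset)
    have cB: "card B \<ge> 1" using fB B by (metis One_nat_def Suc_leI card_gt_0_iff empty_iff)
    have cI: "card I = card (I - B) + card B"
      using B I fB by (metis card_Diff_subset card_mono le_add_diff_inverse2)
    have "(\<Sum>Q\<in>{Q. partition_on (I - B) Q}. (Cst ((-1) ^ (card I - card (insert B Q))) * FO pl ls (insert B Q) :: 'l multiset \<Rightarrow>\<^sub>0 'k))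
       = (\<Sum>Q\<in>{Q. partition_on (I - B) Q}. Cst (sg B) * (Cst ((-1) ^ (card (I - B) - card Q)) * Phi pl (lP pl ls B) (FO pl ls Q)))"
    proof (rule sum.cong[OF refl])
      fix Q assume "Q \<in> {Q. partition_on (I - B) Q}"
      then have Q: "partition_on (I - B) Q" by simp
      have finQ: "finite Q" using Q I by (metis finite_Diff finite_UnionD partition_onD1)
      have nin: "B \<notin> Q" using block_not_in[OF Q] B by auto
      have cQ: "card Q \<le> card (I - B)" using card_partition_le[OF _ Q] I by simp
      have "card I - card (insert B Q) = (card (I - B) - card Q) + (card B - 1)"
        using finQ nin cQ cI cB by simp
      then have "(-1::'k) ^ (card I - card (insert B Q)) = sg B * (-1) ^ (card (I - B) - card Q)"
        by (simp add: sg_def power_add mult.commute)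
      then show "(Cst ((-1) ^ (card I - card (insert B Q))) * FO pl ls (insert B Q) :: 'l multiset \<Rightarrow>\<^sub>0 'k)
         = Cst (sg B) * (Cst ((-1) ^ (card (I - B) - card Q)) * Phi pl (lP pl ls B) (FO pl ls Q))"
        by (simp add: FO_insert[OF Q I(1) B I(3)] Cst_mult mult.assoc)
    qed
    also have "\<dots> = Cst (sg B) * Phi pl (lP pl ls B) (R pl ls (I - B))"
      by (simp add: R_def Phi_sum Phi_Cst sum_distrib_left)
    finally show "(\<Sum>Q\<in>{Q. partition_on (I - B) Q}. (Cst ((-1) ^ (card I - card (insert B Q))) * FO pl ls (insert B Q) :: 'l multiset \<Rightarrow>\<^sub>0 'k))
       = Cst (sg B) * Phi pl (lP pl ls B) (R pl ls (I - B))" .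
  qed
  finally show ?thesis .
qed

lemma F_remove: "finite J \<Longrightarrow> j \<in> J \<Longrightarrow> F ls J = add_mset (ls ! j) (F ls (J - {j}))"
  unfolding F_def by (subst mset_set.remove) auto

lemma Phi_M:
  assumes "finite J"
  shows "(Phi pl z (N (F ls J)) :: 'l::ab_group_add multiset \<Rightarrow>\<^sub>0 'k::field) =
    N (add_mset z (F ls J)) + (\<Sum>j\<in>J. N (add_mset (pl (ls ! j) z) (F ls (J - {j}))))"
proof -
  have "Tm pl z (F ls J) = (\<Sum>j\<in>J. (N (add_mset (pl (ls ! j) z) (F ls J - {#ls ! j#})) :: 'l multiset \<Rightarrow>\<^sub>0 'k))"
    unfolding Tm_def by (simp add: F_def sum_unfold_sum_mset image_mset.compositionality comp_def)
  also have "\<dots> = (\<Sum>j\<in>J. N (add_mset (pl (ls ! j) z) (F ls (J - {j}))))"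
    by (rule sum.cong[OF refl]) (simp add: F_remove[OF assms])
  finally show ?thesis by (simp add: Phi_single Gm_def)
qed




definition XX :: "('l \<Rightarrow> 'l \<Rightarrow> 'l::ab_group_add) \<Rightarrow> 'l list \<Rightarrow> nat set \<Rightarrow> nat set \<Rightarrow> nat \<Rightarrow> ('l multiset \<Rightarrow>\<^sub>0 'k::comm_ring_1)" where
  "XX pl ls I B j = N (add_mset (pl (ls ! j) (lP pl ls B)) (F ls (I - B - {j})))"

lemma sg_insert:
  assumes "finite B" "B \<noteq> {}" "j \<notin> B"
  shows "sg (insert j B) = - (sg B :: 'k::comm_ring_1)"
proof -
  obtain c where c: "card B = Suc c" using assms by (metis card_0_eq not0_implies_Suc)
  show ?thesis using assms c by (simp add: sg_def)
qed

lemma cancel: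
  assumes I: "finite I" "n \<in> I"
  shows "(\<Sum>B\<in>{B. B \<subseteq> I \<and> n \<in> B \<and> B \<noteq> {n}}. Cst (sg B) * (\<Sum>i\<in>B - {n}. XX pl ls I (B - {i}) i))
       = - (\<Sum>B\<in>{B. B \<subseteq> I \<and> n \<in> B}. Cst (sg B) * (\<Sum>j\<in>I - B. (XX pl ls I B j :: 'l::ab_group_add multiset \<Rightarrow>\<^sub>0 'k::comm_ring_1)))"
proof -
  let ?S2 = "SIGMA B:{B. B \<subseteq> I \<and> n \<in> B \<and> B \<noteq> {n}}. B - {n}"
  let ?S1 = "SIGMA B:{B. B \<subseteq> I \<and> n \<in> B}. I - B"
  have fin1: "finite {B. B \<subseteq> I \<and> n \<in> B \<and> B \<noteq> {n}}" "finite {B. B \<subseteq> I \<and> n \<in> B}" using I by auto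
  have "(\<Sum>B\<in>{B. B \<subseteq> I \<and> n \<in> B \<and> B \<noteq> {n}}. Cst (sg B) * (\<Sum>i\<in>B - {n}. (XX pl ls I (B - {i}) i :: 'l multiset \<Rightarrow>\<^sub>0 'k)))
     = (\<Sum>(B, i)\<in>?S2. Cst (sg B) * XX pl ls I (B - {i}) i)"
    unfolding sum_distrib_left by (rule sum.Sigma) (use fin1 I in \<open>auto intro: finite_subset\<close>)
  also have "\<dots> = (\<Sum>(B, j)\<in>?S1. - (Cst (sg B) * XX pl ls I B j))"
  proof (rule sum.reindex_bij_witness[where j="\<lambda>(B, i). (B - {i}, i)" and i="\<lambda>(B, j). (insert j B, j)"], goal_cases)
    case (1 a) then show ?case by auto
  next
    case (2 a) then show ?case by auto
  next
    case (3 b) then show ?case by auto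
  next
    case (4 b) then show ?case by auto
  next
    case (5 a)
    then obtain B i where a: "a = (B, i)" "B \<subseteq> I" "n \<in> B" "i \<in> B" "i \<noteq> n" by auto
    have fB: "finite (B - {i})" using a I by (auto intro: finite_subset)
    have ne: "B - {i} \<noteq> {}" using a(3,5) by auto
    have "sg (insert i (B - {i})) = - (sg (B - {i}) :: 'k)" by (rule sg_insert[OF fB ne]) simp
    moreover have "insert i (B - {i}) = B" using a by auto
    ultimately show ?case using a by (simp add: Cst_def single_uminus)
  qed
  also have "\<dots> = - (\<Sum>(B, j)\<in>?S1. Cst (sg B) * XX pl ls I B j)"
    by (simp add: sum_negf case_prod_unfold)
  also have "(\<Sum>(B, j)\<in>?S1. Cst (sg B) * (XX pl ls I B j :: 'l multiset \<Rightarrow>\<^sub>0 'k)) =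
      (\<Sum>B\<in>{B. B \<subseteq> I \<and> n \<in> B}. Cst (sg B) * (\<Sum>j\<in>I - B. XX pl ls I B j))"
    unfolding sum_distrib_left by (rule sum.Sigma[symmetric]) (use fin1 I in auto)
  finally show ?thesis .
qed




context PL
begin

lemma Phi_eqS: "eqS scale p q \<Longrightarrow> eqS scale (Phi pl z p) (Phi pl z q)"
  unfolding eqS_def Phi_diff[symmetric] by (rule Phi_symI)

lemma U_rec:
  assumes I: "finite I" and B: "B \<subseteq> I" "n \<in> B" and n: "\<forall>x\<in>I. x \<le> n" and ne: "B \<noteq> {n}"
  shows "eqS scale (N (add_mset (lP pl ls B) (F ls (I - B))) :: 'l multiset \<Rightarrow>\<^sub>0 'k)
           (\<Sum>i\<in>B - {n}. XX pl ls I (B - {i}) i)"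
proof -
  have fB: "finite B" using B I by (auto intro: finite_subset)
  let ?m = "F ls (I - B)"
  have "(N (add_mset (lP pl ls B) ?m) :: 'l multiset \<Rightarrow>\<^sub>0 'k) = N ?m * Xv (\<Sum>i\<in>B - {n}. pl (ls ! i) (lP pl ls (B - {i})))"
  proof -
    have "\<forall>x\<in>B. x \<le> n" using B n by auto
    from lP_rec[OF fB B(2) this ne] show ?thesis by (simp add: N_mult_Xv)
  qed
  also have "eqS scale \<dots> (N ?m * (\<Sum>i\<in>B - {n}. Xv (pl (ls ! i) (lP pl ls (B - {i})))))"
    by (rule eqS_mult[OF Xv_sum])
  also have "N ?m * (\<Sum>i\<in>B - {n}. Xv (pl (ls ! i) (lP pl ls (B - {i})))) = (\<Sum>i\<in>B - {n}. XX pl ls I (B - {i}) i)"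
    unfolding sum_distrib_left
  proof (rule sum.cong[OF refl])
    fix i assume "i \<in> B - {n}"
    then have "I - (B - {i}) - {i} = I - B" using B by auto
    then show "N ?m * Xv (pl (ls ! i) (lP pl ls (B - {i}))) = XX pl ls I (B - {i}) i"
      by (simp add: XX_def N_mult_Xv)
  qed
  finally show ?thesis .
qed

lemma total:
  assumes I: "finite I" "n \<in> I" "\<forall>x\<in>I. x \<le> n"
  shows "eqS scale (\<Sum>B\<in>{B. B \<subseteq> I \<and> n \<in> B}. Cst (sg B) *
      (N (add_mset (lP pl ls B) (F ls (I - B))) + (\<Sum>j\<in>I - B. XX pl ls I B j)) :: 'l multiset \<Rightarrow>\<^sub>0 'k)
    (N (F ls I))"
proof -
  let ?Bs = "{B. B \<subseteq> I \<and> n \<in> B}"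
  let ?Bs2 = "{B. B \<subseteq> I \<and> n \<in> B \<and> B \<noteq> {n}}"
  let ?U = "\<lambda>B. (N (add_mset (lP pl ls B) (F ls (I - B))) :: 'l multiset \<Rightarrow>\<^sub>0 'k)"
  let ?X = "\<lambda>B. (\<Sum>j\<in>I - B. (XX pl ls I B j :: 'l multiset \<Rightarrow>\<^sub>0 'k))"
  let ?Y = "\<lambda>B. (\<Sum>i\<in>B - {n}. (XX pl ls I (B - {i}) i :: 'l multiset \<Rightarrow>\<^sub>0 'k))"
  have Bs: "?Bs = insert {n} ?Bs2" using I by auto
  have fin2: "finite ?Bs2" using I by auto
  have U1: "?U {n} = N (F ls I)"
    using F_remove[OF I(1,2), of ls] by (simp add: lP_single)
  have "(\<Sum>B\<in>?Bs. Cst (sg B) * (?U B + ?X B)) = (\<Sum>B\<in>?Bs. Cst (sg B) * ?U B) + (\<Sum>B\<in>?Bs. Cst (sg B) * ?X B)"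
    by (simp add: distrib_left sum.distrib)
  also have "(\<Sum>B\<in>?Bs. Cst (sg B) * ?U B) = N (F ls I) + (\<Sum>B\<in>?Bs2. Cst (sg B) * ?U B)"
    unfolding Bs using fin2 U1 by (simp add: sg_def)
  finally have e1: "(\<Sum>B\<in>?Bs. Cst (sg B) * (?U B + ?X B)) = N (F ls I) + (\<Sum>B\<in>?Bs2. Cst (sg B) * ?U B) + (\<Sum>B\<in>?Bs. Cst (sg B) * ?X B)" .
  have e2: "eqS scale (\<Sum>B\<in>?Bs2. Cst (sg B) * ?U B) (\<Sum>B\<in>?Bs2. Cst (sg B) * ?Y B)"
    by (rule eqS_sum, rule eqS_mult, rule U_rec) (use I in auto)
  have e3: "(\<Sum>B\<in>?Bs2. Cst (sg B) * ?Y B) = - (\<Sum>B\<in>?Bs. Cst (sg B) * ?X B)"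
    by (rule cancel[OF I(1,2)])
  have "eqS scale (N (F ls I) + (\<Sum>B\<in>?Bs2. Cst (sg B) * ?U B) + (\<Sum>B\<in>?Bs. Cst (sg B) * ?X B))
     (N (F ls I) + (\<Sum>B\<in>?Bs2. Cst (sg B) * ?Y B) + (\<Sum>B\<in>?Bs. Cst (sg B) * ?X B))"
    by (intro eqS_add eqS_refl e2)
  also have "N (F ls I) + (\<Sum>B\<in>?Bs2. Cst (sg B) * ?Y B) + (\<Sum>B\<in>?Bs. Cst (sg B) * ?X B) = N (F ls I)"
    unfolding e3 by simp
  finally show ?thesis unfolding e1 .
qed

lemma main:
  assumes "finite I"
  shows "eqS scale (R pl ls I :: 'l multiset \<Rightarrow>\<^sub>0 'k) (N (F ls I))"
  using assms
proof (induction I rule: finite_psubset_induct)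
  case (psubset I)
  show ?case
  proof (cases "I = {}")
    case True
    have e: "{P. partition_on {} P} = {{}}" by (auto simp: partition_on_empty)
    have "(R pl ls I :: 'l multiset \<Rightarrow>\<^sub>0 'k) = 1"
      unfolding R_def True e by (simp add: FO_def ordered_blocks_def)
    moreover have "(N (F ls I) :: 'l multiset \<Rightarrow>\<^sub>0 'k) = 1" using True by (simp add: F_def)
    ultimately show ?thesis by (simp add: eqS_refl)
  next
    case False
    define n where "n = Max I"
    have I: "finite I" "n \<in> I" "\<forall>x\<in>I. x \<le> n" using psubset(1) False by (auto simp: n_def)
    have "(R pl ls I :: 'l multiset \<Rightarrow>\<^sub>0 'k) =
      (\<Sum>B\<in>{B. B \<subseteq> I \<and> n \<in> B}. Cst (sg B) * Phi pl (lP pl ls B) (R pl ls (I - B)))"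
      by (rule R_split[OF I])
    also have "eqS scale \<dots> (\<Sum>B\<in>{B. B \<subseteq> I \<and> n \<in> B}. Cst (sg B) * Phi pl (lP pl ls B) (N (F ls (I - B))))"
    proof (rule eqS_sum, rule eqS_mult, rule Phi_eqS)
      fix B assume "B \<in> {B. B \<subseteq> I \<and> n \<in> B}"
      then have "I - B \<subset> I" by auto
      then show "eqS scale (R pl ls (I - B)) (N (F ls (I - B)))" by (rule psubset.IH)
    qed
    also have "(\<Sum>B\<in>{B. B \<subseteq> I \<and> n \<in> B}. Cst (sg B) * Phi pl (lP pl ls B) (N (F ls (I - B))) :: 'l multiset \<Rightarrow>\<^sub>0 'k) =
       (\<Sum>B\<in>{B. B \<subseteq> I \<and> n \<in> B}. Cst (sg B) *
      (N (add_mset (lP pl ls B) (F ls (I - B))) + (\<Sum>j\<in>I - B. XX pl ls I B j)))"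
      by (rule sum.cong[OF refl]) (use I in \<open>simp add: Phi_M XX_def\<close>)
    also have "eqS scale \<dots> (N (F ls I))" by (rule total[OF I])
    finally show ?thesis .
  qed
qed

end


theorem proposition2p1:
  fixes scale :: "'k::field_char_0 \<Rightarrow> 'l::ab_group_add \<Rightarrow> 'l"
    and pl :: "'l \<Rightarrow> 'l \<Rightarrow> 'l"
    and ls :: "'l list"
  assumes "right_pre_Lie scale pl"
  shows "eqS scale (mon ls)
     (\<Sum>P\<in>{P. partition_on {0..<length ls} P}.
        Cst ((-1) ^ (length ls - card P)) *
        foldl (\<lambda>acc x. gop pl acc (Xv x)) 1 (map (lP pl ls) (ordered_blocks P)))"
proof -
  interpret PL scale pl by unfold_locales (rule assms)
  have m: "eqS scale (R pl ls {0..<length ls} :: 'l multiset \<Rightarrow>\<^sub>0 'k) (N (F ls {0..<length ls}))"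
    by (rule main) simp
  have "F ls {0..<length ls} = mset ls"
  proof -
    have "F ls {0..<length ls} = mset (map (nth ls) [0..<length ls])"
      by (simp add: F_def mset_upt)
    then show ?thesis by (simp add: map_nth)
  qed
  then have "(mon ls :: 'l multiset \<Rightarrow>\<^sub>0 'k) = N (F ls {0..<length ls})" by (simp add: mon_eq)
  moreover have "(R pl ls {0..<length ls} :: 'l multiset \<Rightarrow>\<^sub>0 'k) = (\<Sum>P\<in>{P. partition_on {0..<length ls} P}.
        Cst ((-1) ^ (length ls - card P)) *
        foldl (\<lambda>acc x. gop pl acc (Xv x)) 1 (map (lP pl ls) (ordered_blocks P)))"
    by (simp add: R_def FO_def)
  ultimately show ?thesis using eqS_sym[OF m] by simp
qed

end
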